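(* Let $f(z)=z+\sum_{n=2}^{\infty}a_nz^n$ belong to the class $\mathcal{S}_u^*$. Then $$|H_{2,2}(f)|=|a_2a_4-a_3^2|\le \frac14,$$ and the estimate is sharp, i.e. there exists a function $f\in\mathcal{S}_u^*$ with $|a_2a_4-a_3^2|=\frac14$.
   Context: $\mathbb{D}=\{z\in\mathbb{C}:|z|<1\}$. The class $\mathcal{S}_u^*$ consists of all analytic functions $f$ on $\mathbb{D}$ with $f(0)=0$, $f'(0)=1$ (so $f(z)=z+\sum_{n\ge2}a_nz^n$) satisfying $\left|\frac{zf'(z)}{f(z)}-1\right|<1$ for all $z\in\mathbb{D}$. The second Hankel determinant is $H_{2,2}(f)=a_2a_4-a_3^2$. *)

theory Defs
  imports "HOL-Complex_Analysis.Complex_Analysis"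
begin

definition coeff_at0 :: "(complex \<Rightarrow> complex) \<Rightarrow> nat \<Rightarrow> complex" where
  "coeff_at0 f n = (deriv ^^ n) f 0 / of_nat (fact n)"

text \<open>The class S_u^*. At z = 0 the quotient z f'(z)/f(z) is understood by its
  removable value 1, so the condition is imposed for z \<noteq> 0 only.\<close>
definition Su_star :: "(complex \<Rightarrow> complex) set" where
  "Su_star = {f. f holomorphic_on ball 0 1 \<and> f 0 = 0 \<and> deriv f 0 = 1 \<and>
     (\<forall>z\<in>ball 0 1. z \<noteq> 0 \<longrightarrow> f z \<noteq> 0 \<and> cmod (z * deriv f z / f z - 1) < 1)}"

definition H22 :: "(complex \<Rightarrow> complex) \<Rightarrow> complex" where
  "H22 f = coeff_at0 f 2 * coeff_at0 f 4 - (coeff_at0 f 3)^2"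

end

theory Submission
  imports Defs
begin


lemma root_sum:
  fixes K n m :: nat
  assumes K: "K > 0" and n: "n < K" and m: "m < K"
  shows "(\<Sum>k<K. (cis (2*pi/K) ^ n * cnj (cis (2*pi/K)) ^ m) ^ k) = (if n = m then of_nat K else 0)"
proof -
  define u where "u = cis (2*pi*(real n - real m)/K)"
  have u: "cis (2*pi/K) ^ n * cnj (cis (2*pi/K)) ^ m = u"
    unfolding u_def cis_cnj by (simp only: Complex.DeMoivre cis_mult) (simp add: algebra_simps diff_divide_distrib)
  show ?thesis
  proof (cases "n = m")
    case True
    then show ?thesis using u by (simp add: u_def)
  next
    case False
    have uK: "u ^ K = 1"
    proof -
      have "u ^ K = cis (2*pi*(real n - real m))" unfolding u_def Complex.DeMoivre using K by simp
      also have "\<dots> = cis (2*pi* of_int (int n - int m))" by simp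
      also have "\<dots> = 1" by (rule cis_multiple_2pi) simp
      finally show ?thesis .
    qed
    have u1: "u \<noteq> 1"
    proof
      assume "u = 1"
      then have "cos (2*pi*(real n - real m)/K) = 1" unfolding u_def
        by (metis cis.simps(1) one_complex.simps(1))
      then obtain j :: int where j: "2*pi*(real n - real m)/K = real_of_int j * 2 * pi"
        unfolding cos_one_2pi_int by blast
      then have "(real n - real m) * (2*pi) = (j * K) * (2*pi)" using K by (simp add: field_simps)
      then have "real n - real m = j * K" using pi_gt_zero by (metis mult_right_cancel pi_neq_zero mult_eq_0_iff zero_neq_numeral)
      then have "int n - int m = j * int K" by (metis of_int_eq_iff of_int_mult of_int_of_nat_eq of_int_diff)
      then have eq: "int n - int m = j * int K" .
      have "j \<noteq> 0" using False eq by auto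
      then have "\<bar>j\<bar> * int K \<ge> 1 * int K" by (intro mult_right_mono) auto
      then have "\<bar>int n - int m\<bar> \<ge> int K" unfolding eq by (simp add: abs_mult)
      then show False using n m by linarith
    qed
    show ?thesis using u uK u1 False by (simp add: sum_gp_strict)
  qed
qed

lemma swap3: "(\<Sum>k\<in>A. \<Sum>n\<in>B. \<Sum>m\<in>C. F k n m) = (\<Sum>n\<in>B. \<Sum>m\<in>C. \<Sum>k\<in>A. F k n m)"
proof -
  have "(\<Sum>k\<in>A. \<Sum>n\<in>B. \<Sum>m\<in>C. F k n m) = (\<Sum>n\<in>B. \<Sum>k\<in>A. \<Sum>m\<in>C. F k n m)" by (rule sum.swap)
  also have "\<dots> = (\<Sum>n\<in>B. \<Sum>m\<in>C. \<Sum>k\<in>A. F k n m)" by (rule sum.cong[OF refl], rule sum.swap)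
  finally show ?thesis .
qed

lemma finite_parseval:
  fixes c :: "nat \<Rightarrow> complex" and \<rho> :: real and K :: nat
  assumes K: "K > 0"
  shows "(\<Sum>k<K. (cmod (\<Sum>n<K. c n * (of_real \<rho> * cis (2*pi/K) ^ k)^n))^2)
         = K * (\<Sum>n<K. (cmod (c n))^2 * \<rho>^(2*n))"
proof -
  define z where "z = cis (2*pi/K)"
  have "complex_of_real (\<Sum>k<K. (cmod (\<Sum>n<K. c n * (of_real \<rho> * z ^ k)^n))^2)
     = (\<Sum>k<K. (\<Sum>n<K. c n * (of_real \<rho> * z ^ k)^n) * cnj (\<Sum>n<K. c n * (of_real \<rho> * z ^ k)^n))"
    by (simp only: of_real_sum complex_norm_square)
  also have "\<dots> = (\<Sum>k<K. \<Sum>n<K. \<Sum>m<K. c n * cnj (c m) * of_real (\<rho>^(n+m)) * (z^n * cnj z ^ m)^k)"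
    apply (intro sum.cong refl)
    apply (simp only: cnj_sum sum_product)
    apply (intro sum.cong refl)
    by (simp add: power_mult_distrib power_add mult_ac flip: power_mult)
  also have "\<dots> = (\<Sum>n<K. \<Sum>m<K. c n * cnj (c m) * of_real (\<rho>^(n+m)) * (\<Sum>k<K. (z^n * cnj z ^ m)^k))"
    by (subst swap3) (intro sum.cong refl, simp add: sum_distrib_left)
  also have "\<dots> = (\<Sum>n<K. \<Sum>m<K. c n * cnj (c m) * of_real (\<rho>^(n+m)) * (if n = m then of_nat K else 0))"
    unfolding z_def by (intro sum.cong refl) (simp add: root_sum K)
  also have "\<dots> = (\<Sum>n<K. c n * cnj (c n) * of_real (\<rho>^(2*n)) * of_nat K)"
    by (intro sum.cong refl) (simp add: if_distrib sum.delta' mult_2 cong: if_cong)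
  also have "\<dots> = complex_of_real (K * (\<Sum>n<K. (cmod (c n))^2 * \<rho>^(2*n)))"
    unfolding of_real_mult of_real_sum complex_norm_square of_real_of_nat_eq sum_distrib_left
    by (intro sum.cong refl) (simp add: mult_ac)
  finally show ?thesis unfolding z_def of_real_eq_iff .
qed

lemma coeff_cauchy:
  fixes w :: "complex \<Rightarrow> complex"
  assumes hol: "w holomorphic_on ball 0 1" and bd: "\<forall>z\<in>ball 0 1. cmod (w z) \<le> 1"
    and r: "0 < r" "r < 1"
  shows "cmod ((deriv^^n) w 0 / fact n) \<le> 1 / r^n"
proof -
  have sub: "cball 0 r \<subseteq> ball (0::complex) 1" using r by auto
  have "norm ((deriv^^n) w 0) \<le> fact n * 1 / r^n"
  proof (rule Cauchy_inequality)
    show "w holomorphic_on ball 0 r" using hol by (rule holomorphic_on_subset) (use r in auto)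
    show "continuous_on (cball 0 r) w"
      using holomorphic_on_imp_continuous_on[OF hol] sub continuous_on_subset by blast
    show "0 < r" using r by simp
    fix x :: complex assume "norm (0 - x) = r"
    then have "x \<in> ball 0 1" using r by simp
    then show "norm (w x) \<le> 1" using bd by blast
  qed
  then show ?thesis by (simp add: norm_divide field_simps)
qed

lemma parseval_K:
  fixes w :: "complex \<Rightarrow> complex"
  assumes hol: "w holomorphic_on ball 0 1" and bd: "\<forall>z\<in>ball 0 1. cmod (w z) \<le> 1"
    and \<rho>: "0 < \<rho>" "\<rho> < 1" and K: "K > 0"
  shows "(\<Sum>n<K. (cmod ((deriv^^n) w 0 / fact n))^2 * \<rho>^(2*n))
           \<le> (1 + (2*\<rho>/(1+\<rho>))^K / (1 - 2*\<rho>/(1+\<rho>)))^2"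
proof -
  define c where "c n = (deriv^^n) w 0 / fact n" for n
  define r where "r = (1+\<rho>)/2"
  define q where "q = 2*\<rho>/(1+\<rho>)"
  have r01: "0 < r" "r < 1" "\<rho> < r" using \<rho> by (auto simp: r_def)
  have q01: "0 < q" "q < 1" using \<rho> by (auto simp: q_def field_simps)
  have qr: "q = \<rho> / r" by (simp add: q_def r_def)
  define B where "B = 1 + q^K / (1 - q)"
  have cb: "cmod (c n) \<le> 1 / r^n" for n
    unfolding c_def by (rule coeff_cauchy[OF hol bd r01(1,2)])
  have Pbound: "cmod (\<Sum>n<K. c n * z^n) \<le> B" if z: "cmod z = \<rho>" for z
  proof -
    have zb: "z \<in> ball 0 1" using z \<rho> by simp
    have ser: "(\<lambda>n. c n * z^n) sums w z"
      using holomorphic_power_series[OF hol zb] by (simp add: c_def)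
    have tail: "(\<lambda>i. c (i+K) * z^(i+K)) sums (w z - (\<Sum>n<K. c n * z^n))"
      using sums_split_initial_segment[OF ser, of K] by simp
    have tb: "norm (c (i+K) * z^(i+K)) \<le> q^K * q^i" for i
    proof -
      have "norm (c (i+K) * z^(i+K)) = cmod (c (i+K)) * \<rho>^(i+K)"
        by (simp add: norm_mult norm_power z)
      also have "\<dots> \<le> (1/r^(i+K)) * \<rho>^(i+K)"
        by (rule mult_right_mono[OF cb]) (use \<rho> in simp)
      also have "\<dots> = q^(i+K)" by (simp add: qr power_divide)
      also have "\<dots> = q^K * q^i" by (simp add: power_add)
      finally show ?thesis .
    qed
    have sg: "(\<lambda>i. q^K * q^i) sums (q^K * (1/(1-q)))"
      by (rule sums_mult) (rule geometric_sums, use q01 in simp)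
    have "norm (w z - (\<Sum>n<K. c n * z^n)) \<le> q^K * (1/(1-q))"
    proof -
      have "norm (w z - (\<Sum>n<K. c n * z^n)) = norm (\<Sum>i. c (i+K) * z^(i+K))"
        using tail sums_unique by metis
      also have "\<dots> \<le> (\<Sum>i. q^K * q^i)"
        by (rule norm_suminf_le[OF tb]) (use sg sums_summable in blast)
      also have "\<dots> = q^K * (1/(1-q))" using sg sums_unique by metis
      finally show ?thesis .
    qed
    moreover have "norm (w z) \<le> 1" using bd zb by blast
    ultimately have "norm (\<Sum>n<K. c n * z^n) \<le> 1 + q^K * (1/(1-q))"
      using norm_triangle_ineq4[of "w z" "w z - (\<Sum>n<K. c n * z^n)"] by simp
    then show ?thesis by (simp add: B_def)
  qed
  have B0: "0 \<le> B" using q01 by (simp add: B_def)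
  have "real K * (\<Sum>n<K. (cmod (c n))^2 * \<rho>^(2*n))
        = (\<Sum>k<K. (cmod (\<Sum>n<K. c n * (of_real \<rho> * cis (2*pi/K) ^ k)^n))^2)"
    by (rule finite_parseval[OF K, symmetric])
  also have "\<dots> \<le> (\<Sum>k<K. B^2)"
  proof (rule sum_mono)
    fix k assume "k \<in> {..<K}"
    have "cmod (of_real \<rho> * cis (2*pi/K) ^ k) = \<rho>" using \<rho> by (simp add: norm_mult norm_power)
    then have "cmod (\<Sum>n<K. c n * (of_real \<rho> * cis (2*pi/K) ^ k)^n) \<le> B" by (rule Pbound)
    then show "(cmod (\<Sum>n<K. c n * (of_real \<rho> * cis (2*pi/K) ^ k)^n))^2 \<le> B^2"
      by (intro power_mono) auto
  qed
  also have "\<dots> = real K * B^2" by simp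
  finally have "(\<Sum>n<K. (cmod (c n))^2 * \<rho>^(2*n)) \<le> B^2" using K by simp
  then show ?thesis by (simp add: c_def B_def q_def)
qed


lemma parseval:
  fixes w :: "complex \<Rightarrow> complex"
  assumes hol: "w holomorphic_on ball 0 1" and bd: "\<forall>z\<in>ball 0 1. cmod (w z) \<le> 1"
  shows "(\<Sum>n<N. (cmod ((deriv^^n) w 0 / fact n))^2) \<le> 1"
proof -
  define a where "a n = (cmod ((deriv^^n) w 0 / fact n))^2" for n
  have rho: "(\<Sum>n<N. a n * \<rho>^(2*n)) \<le> 1" if \<rho>: "0 < \<rho>" "\<rho> < 1" for \<rho>
  proof -
    define q where "q = 2*\<rho>/(1+\<rho>)"
    have q01: "0 < q" "q < 1" using \<rho> by (auto simp: q_def field_simps)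
    have "(\<lambda>K. (1 + q^K/(1-q))^2) \<longlonglongrightarrow> (1 + 0/(1-q))^2"
      by (intro tendsto_intros LIMSEQ_power_zero) (use q01 in auto)
    then have lim: "(\<lambda>K. (1 + q^K/(1-q))^2) \<longlonglongrightarrow> 1" by simp
    show ?thesis
    proof (rule LIMSEQ_le_const[OF lim], intro exI allI impI)
      fix K assume K: "K \<ge> max N 1"
      have "(\<Sum>n<N. a n * \<rho>^(2*n)) \<le> (\<Sum>n<K. a n * \<rho>^(2*n))"
        by (rule sum_mono2) (use K \<rho> in \<open>auto simp: a_def\<close>)
      also have "\<dots> \<le> (1 + q^K/(1-q))^2"
        unfolding a_def q_def by (rule parseval_K[OF hol bd \<rho>]) (use K in auto)
      finally show "(\<Sum>n<N. a n * \<rho>^(2*n)) \<le> (1 + q^K/(1-q))^2" .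
    qed
  qed
  have "((\<lambda>\<rho>. \<Sum>n<N. a n * \<rho>^(2*n)) \<longlongrightarrow> (\<Sum>n<N. a n * 1^(2*n))) (at_left 1)"
    by (intro tendsto_intros)
  then have lim: "((\<lambda>\<rho>. \<Sum>n<N. a n * \<rho>^(2*n)) \<longlongrightarrow> (\<Sum>n<N. a n)) (at_left 1)" by simp
  have ev: "eventually (\<lambda>\<rho>. (\<Sum>n<N. a n * \<rho>^(2*n)) \<le> 1) (at_left (1::real))"
  proof -
    have "eventually (\<lambda>\<rho>. \<rho> \<in> {0<..<1}) (at_left (1::real))"
      by (rule eventually_at_left_real) simp
    then show ?thesis by eventually_elim (use rho in auto)
  qed
  have "(\<Sum>n<N. a n) \<le> 1"
    by (rule tendsto_upperbound[OF lim ev]) (simp add: trivial_limit_at_left_real)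
  then show ?thesis by (simp add: a_def)
qed



lemma D_rel:
  fixes f w :: "complex \<Rightarrow> complex"
  assumes holf: "f holomorphic_on ball 0 1" and holw: "w holomorphic_on ball 0 1"
    and eq: "\<forall>z\<in>ball 0 1. z * deriv f z = f z * (1 + w z)" and n: "n \<ge> 1"
  shows "of_nat n * (deriv^^n) f 0 =
    (\<Sum>i=0..n. of_nat (n choose i) * (deriv^^i) f 0 * ((if n - i = 0 then 1 else 0) + (deriv^^(n-i)) w 0))"
proof -
  have op: "open (ball (0::complex) 1)" by simp
  have z0: "(0::complex) \<in> ball 0 1" by simp
  have holdf: "deriv f holomorphic_on ball 0 1" by (rule holomorphic_deriv[OF holf op])
  have hol1w: "(\<lambda>z. 1 + w z) holomorphic_on ball 0 1" by (intro holomorphic_intros holw)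
  have ev: "eventually (\<lambda>z. z * deriv f z = f z * (1 + w z)) (nhds 0)"
    using eventually_nhds_in_open[OF op z0] by eventually_elim (use eq in auto)
  have "(deriv^^n) (\<lambda>z. z * deriv f z) 0 = (deriv^^n) (\<lambda>z. f z * (1 + w z)) 0"
    by (rule higher_deriv_cong_ev[OF ev refl])
  moreover have "(deriv^^n) (\<lambda>z. z * deriv f z) 0 = of_nat n * (deriv^^n) f 0"
  proof -
    have "(deriv^^n) (\<lambda>z. z * deriv f z) 0 =
       (\<Sum>i=0..n. of_nat (n choose i) * (deriv^^i) (\<lambda>z. z) 0 * (deriv^^(n-i)) (deriv f) 0)"
      by (rule higher_deriv_mult[OF _ holdf op z0]) (intro holomorphic_intros)
    also have "\<dots> = (\<Sum>i=0..n. if i = 1 then of_nat n * (deriv^^n) f 0 else 0)"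
    proof (intro sum.cong refl)
      fix i assume "i \<in> {0..n}"
      have "(deriv^^(n-1)) (deriv f) = (deriv^^n) f"
        using n by (metis Suc_diff_le diff_Suc_1 funpow_Suc_right comp_apply le_add_diff_inverse2 plus_1_eq_Suc funpow_simps_right(2))
      then show "of_nat (n choose i) * (deriv^^i) (\<lambda>z. z) 0 * (deriv^^(n-i)) (deriv f) 0 =
          (if i = 1 then of_nat n * (deriv^^n) f 0 else 0)" by auto
    qed
    also have "\<dots> = of_nat n * (deriv^^n) f 0" using n by (simp add: sum.delta)
    finally show ?thesis .
  qed
  moreover have "(deriv^^n) (\<lambda>z. f z * (1 + w z)) 0 =
     (\<Sum>i=0..n. of_nat (n choose i) * (deriv^^i) f 0 * ((if n - i = 0 then 1 else 0) + (deriv^^(n-i)) w 0))"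
  proof -
    have "(deriv^^n) (\<lambda>z. f z * (1 + w z)) 0 =
       (\<Sum>i=0..n. of_nat (n choose i) * (deriv^^i) f 0 * (deriv^^(n-i)) (\<lambda>z. 1 + w z) 0)"
      by (rule higher_deriv_mult[OF holf hol1w op z0])
    also have "\<dots> = (\<Sum>i=0..n. of_nat (n choose i) * (deriv^^i) f 0 * ((if n - i = 0 then 1 else 0) + (deriv^^(n-i)) w 0))"
    proof (intro sum.cong refl)
      fix i
      have "(deriv^^(n-i)) (\<lambda>z. 1 + w z) 0 = (deriv^^(n-i)) (\<lambda>z. 1) 0 + (deriv^^(n-i)) w 0"
        by (rule higher_deriv_add[OF _ holw op z0]) simp
      then show "of_nat (n choose i) * (deriv^^i) f 0 * (deriv^^(n-i)) (\<lambda>z. 1 + w z) 0 =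
         of_nat (n choose i) * (deriv^^i) f 0 * ((if n - i = 0 then 1 else 0) + (deriv^^(n-i)) w 0)"
        by simp
    qed
    finally show ?thesis .
  qed
  ultimately show ?thesis by simp
qed

lemma H22_formula:
  fixes f w :: "complex \<Rightarrow> complex"
  assumes holf: "f holomorphic_on ball 0 1" and holw: "w holomorphic_on ball 0 1"
    and eq: "\<forall>z\<in>ball 0 1. z * deriv f z = f z * (1 + w z)"
    and f0: "f 0 = 0" and f1: "deriv f 0 = 1" and w0: "w 0 = 0"
  shows "H22 f = coeff_at0 w 1 * coeff_at0 w 3 / 3 - (coeff_at0 w 1)^4/12 - (coeff_at0 w 2)^2/4"
proof -
  note R = D_rel[OF holf holw eq]
  have e2: "2 * (deriv^^2) f 0 = 2 * deriv w 0 + (deriv^^2) f 0"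
    using R[of 2] f0 f1 w0 by (simp add: numeral_eq_Suc)
  have e3: "3 * (deriv^^3) f 0 = 3 * (deriv^^2) w 0 + 3 * (deriv^^2) f 0 * deriv w 0 + (deriv^^3) f 0"
    using R[of 3] f0 f1 w0 by (simp add: numeral_eq_Suc)
  have e4: "4 * (deriv^^4) f 0 = 4 * (deriv^^3) w 0 + 6 * (deriv^^2) f 0 * (deriv^^2) w 0
      + 4 * (deriv^^3) f 0 * deriv w 0 + (deriv^^4) f 0"
    using R[of 4] f0 f1 w0 by (simp add: numeral_eq_Suc)
  define W1 where "W1 = deriv w 0"
  define W2 where "W2 = (deriv^^2) w 0"
  define W3 where "W3 = (deriv^^3) w 0"
  have h2: "(deriv^^2) f 0 = 2 * W1" using e2 unfolding W1_def by algebra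
  have h3: "(deriv^^3) f 0 = (3 * W2 + 6 * W1^2) / 2" using e3 h2 unfolding W1_def W2_def
    by (simp add: field_simps power2_eq_square)
  have h4: "(deriv^^4) f 0 = (4 * W3 + 6 * (2*W1) * W2 + 4 * ((3 * W2 + 6 * W1^2) / 2) * W1) / 3"
    using e4 h2 h3 unfolding W1_def W2_def W3_def by (simp add: field_simps)
  have fa: "fact 2 = (2::complex)" "fact 3 = (6::complex)" "fact 4 = (24::complex)"
    by (simp_all add: numeral_eq_Suc)
  have c1: "coeff_at0 w 1 = W1" by (simp add: coeff_at0_def W1_def)
  show ?thesis
    unfolding H22_def c1 unfolding coeff_at0_def h2 h3 h4 fa W2_def[symmetric] W3_def[symmetric]
    by (simp add: fa field_simps power2_eq_square) algebra
qed


lemma Su_star_w: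
  assumes "f \<in> Su_star"
  obtains w where "w holomorphic_on ball 0 1" "w 0 = 0" "\<forall>z\<in>ball 0 1. cmod (w z) < 1"
    "\<forall>z\<in>ball 0 1. z * deriv f z = f z * (1 + w z)"
proof -
  have holf: "f holomorphic_on ball 0 1" and f0: "f 0 = 0" and f1: "deriv f 0 = 1"
    and cond: "\<forall>z\<in>ball 0 1. z \<noteq> 0 \<longrightarrow> f z \<noteq> 0 \<and> cmod (z * deriv f z / f z - 1) < 1"
    using assms by (auto simp: Su_star_def)
  have op: "open (ball (0::complex) 1)" by simp
  define g where "g z = (if z = 0 then deriv f 0 else (f z - f 0) / (z - 0))" for z
  have holg: "g holomorphic_on ball 0 1"
    unfolding g_def[abs_def] by (rule pole_lemma[OF holf]) simp
  have gz: "g z = (if z = 0 then 1 else f z / z)" for z by (simp add: g_def f0 f1)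
  have fg: "f z = z * g z" for z by (simp add: gz f0)
  have gnz: "g z \<noteq> 0" if "z \<in> ball 0 1" for z using cond that by (auto simp: gz)
  have holdg: "deriv g holomorphic_on ball 0 1" by (rule holomorphic_deriv[OF holg op])
  define w where "w z = z * deriv g z / g z" for z
  have holw: "w holomorphic_on ball 0 1"
    unfolding w_def[abs_def] by (intro holomorphic_intros holdg holg) (use gnz in auto)
  have df: "deriv f z = g z + z * deriv g z" if z: "z \<in> ball 0 1" for z
  proof -
    have gd: "(g has_field_derivative deriv g z) (at z)"
      using holg z op by (meson holomorphic_derivI)
    have "((\<lambda>z. z * g z) has_field_derivative (g z + z * deriv g z)) (at z)"
      using DERIV_mult[OF DERIV_ident gd] by (simp add: algebra_simps)
    then have "(f has_field_derivative (g z + z * deriv g z)) (at z)"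
      by (simp add: fg[abs_def])
    then show ?thesis by (rule DERIV_imp_deriv)
  qed
  have weq: "w z = z * deriv f z / f z - 1" if "z \<in> ball 0 1" "z \<noteq> 0" for z
    using that gnz[OF that(1)] by (simp add: w_def df fg field_simps)
  show ?thesis
  proof
    show "w holomorphic_on ball 0 1" by (rule holw)
    show "w 0 = 0" by (simp add: w_def)
    show "\<forall>z\<in>ball 0 1. cmod (w z) < 1"
    proof
      fix z :: complex assume z: "z \<in> ball 0 1"
      show "cmod (w z) < 1"
      proof (cases "z = 0")
        case True then show ?thesis by (simp add: w_def)
      next
        case False then show ?thesis using cond z weq[OF z False] by auto
      qed
    qed
    show "\<forall>z\<in>ball 0 1. z * deriv f z = f z * (1 + w z)"
    proof
      fix z :: complex assume z: "z \<in> ball 0 1"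
      show "z * deriv f z = f z * (1 + w z)"
        using gnz[OF z] by (simp add: df[OF z] fg w_def field_simps)
    qed
  qed
qed

lemma real_ineq:
  fixes x y t :: real
  assumes "0 \<le> x" "0 \<le> y" "0 \<le> t" "x^2 + y^2 + t^2 \<le> 1"
  shows "x * t / 3 + x^4 / 12 + y^2 / 4 \<le> 1/4"
proof -
  have x1: "x^2 \<le> 1" using assms zero_le_power2[of y] zero_le_power2[of t] by linarith
  have "x^2 * x^2 \<le> x^2 * 1" by (rule mult_left_mono[OF x1]) simp
  then have "x^4 \<le> x^2" by (simp add: power2_eq_square power4_eq_xxxx mult.assoc)
  moreover have "x * t \<le> (x^2 + t^2) / 2"
  proof -
    have "0 \<le> (x - t)^2" by simp
    then show ?thesis by (simp add: power2_diff)
  qed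
  moreover have lin: "A / 3 + B / 12 + Y / 4 \<le> 1/4"
    if "B \<le> X" "A \<le> (X + T) / 2" "X + Y + T \<le> 1" "0 \<le> T" for A B X Y T :: real
    using that by argo
  ultimately show ?thesis using assms zero_le_power2[of t] lin by blast
qed

lemma complex_ineq:
  fixes a b c :: complex
  assumes "(cmod a)^2 + (cmod b)^2 + (cmod c)^2 \<le> 1"
  shows "cmod (a * c / 3 - a^4/12 - b^2/4) \<le> 1/4"
proof -
  have "cmod (a * c / 3 - a^4/12 - b^2/4) \<le> cmod (a * c / 3) + cmod (a^4/12) + cmod (b^2/4)"
    using norm_triangle_ineq4[of "a * c / 3 - a^4/12" "b^2/4"] norm_triangle_ineq4[of "a * c / 3" "a^4/12"]
    by linarith
  also have "\<dots> = cmod a * cmod c / 3 + (cmod a)^4/12 + (cmod b)^2/4"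
    by (simp add: norm_mult norm_divide norm_power)
  also have "\<dots> \<le> 1/4" by (rule real_ineq) (use assms in auto)
  finally show ?thesis .
qed


lemma part1:
  assumes f: "f \<in> Su_star"
  shows "cmod (H22 f) \<le> 1/4"
proof -
  have holf: "f holomorphic_on ball 0 1" and f0: "f 0 = 0" and f1: "deriv f 0 = 1"
    using f by (auto simp: Su_star_def)
  obtain w where holw: "w holomorphic_on ball 0 1" and w0: "w 0 = 0"
    and wb: "\<forall>z\<in>ball 0 1. cmod (w z) < 1"
    and eq: "\<forall>z\<in>ball 0 1. z * deriv f z = f z * (1 + w z)"
    using Su_star_w[OF f] by blast
  have H: "H22 f = coeff_at0 w 1 * coeff_at0 w 3 / 3 - (coeff_at0 w 1)^4/12 - (coeff_at0 w 2)^2/4"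
    by (rule H22_formula[OF holf holw eq f0 f1 w0])
  have wb': "\<forall>z\<in>ball 0 1. cmod (w z) \<le> 1" using wb by (simp add: less_imp_le)
  have P: "(\<Sum>n<4. (cmod ((deriv^^n) w 0 / fact n))^2) \<le> 1"
    by (rule parseval[OF holw wb'])
  have ca: "coeff_at0 w n = (deriv^^n) w 0 / fact n" for n by (simp add: coeff_at0_def)
  have "(\<Sum>n<4. (cmod ((deriv^^n) w 0 / fact n))^2) =
      (cmod (coeff_at0 w 1))^2 + (cmod (coeff_at0 w 2))^2 + (cmod (coeff_at0 w 3))^2"
    unfolding ca by (simp add: numeral_eq_Suc w0)
  with P have "(cmod (coeff_at0 w 1))^2 + (cmod (coeff_at0 w 2))^2 + (cmod (coeff_at0 w 3))^2 \<le> 1"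
    by simp
  then show ?thesis unfolding H by (rule complex_ineq)
qed

lemma part2: "\<exists>f\<in>Su_star. cmod (H22 f) = 1/4"
proof -
  define f where "f z = z * exp (z^2/2)" for z :: complex
  have df: "(f has_field_derivative (exp (z^2/2) * (1 + z^2))) (at z)" for z
    unfolding f_def[abs_def]
    by (rule derivative_eq_intros refl | simp)+ (simp add: algebra_simps power2_eq_square)
  have dfe: "deriv f z = exp (z^2/2) * (1 + z^2)" for z by (rule DERIV_imp_deriv[OF df])
  have holf: "f holomorphic_on ball 0 1"
    unfolding f_def[abs_def] by (intro holomorphic_intros) auto
  have fS: "f \<in> Su_star"
    unfolding Su_star_def
  proof (intro CollectI conjI ballI impI holf)
    show "f 0 = 0" by (simp add: f_def)
    show "deriv f 0 = 1" by (simp add: dfe)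
    fix z :: complex assume z: "z \<in> ball 0 1" "z \<noteq> 0"
    show "f z \<noteq> 0" using z by (simp add: f_def)
    have "z * deriv f z / f z - 1 = z^2" using z by (simp add: dfe f_def field_simps)
    then show "cmod (z * deriv f z / f z - 1) < 1" using z
      by (simp add: norm_power power_less_one_iff abs_square_less_1)
  qed
  define w where "w z = z^2" for z :: complex
  have holw: "w holomorphic_on ball 0 1" unfolding w_def[abs_def] by (intro holomorphic_intros)
  have eq: "\<forall>z\<in>ball 0 1. z * deriv f z = f z * (1 + w z)"
    by (simp add: dfe f_def w_def algebra_simps power2_eq_square)
  have H: "H22 f = coeff_at0 w 1 * coeff_at0 w 3 / 3 - (coeff_at0 w 1)^4/12 - (coeff_at0 w 2)^2/4"
    by (rule H22_formula[OF holf holw eq]) (simp_all add: f_def dfe w_def)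
  have dw: "deriv w = (\<lambda>z. 2 * z)"
  proof
    fix z :: complex
    have "(w has_field_derivative 2 * z) (at z)"
      unfolding w_def[abs_def] by (rule derivative_eq_intros refl | simp)+
    then show "deriv w z = 2 * z" by (rule DERIV_imp_deriv)
  qed
  have hw: "(deriv^^(Suc m)) w 0 = (deriv^^m) (\<lambda>z. 2 * z) 0" for m
    by (simp only: funpow_Suc_right comp_apply dw)
  have c1: "coeff_at0 w 1 = 0" using hw[of 0] by (simp add: coeff_at0_def)
  have c2: "coeff_at0 w 2 = 1" using hw[of 1] by (simp add: coeff_at0_def numeral_eq_Suc)
  have c3: "coeff_at0 w 3 = 0" using hw[of 2] by (simp add: coeff_at0_def numeral_eq_Suc)
  have "cmod (H22 f) = 1/4" unfolding H c1 c2 c3 by simp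
  with fS show ?thesis by blast
qed

theorem mainTheorem1:
  shows "(\<forall>f\<in>Su_star. cmod (H22 f) \<le> 1/4) \<and> (\<exists>f\<in>Su_star. cmod (H22 f) = 1/4)"
  using part1 part2 by blast

end
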